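(* Let $f\colon\mathbb{R}\to\mathbb{R}$ be a smooth function such that $f$ and $\dot f$ are bounded on $\mathbb{R}$, and let $g\colon\mathbb{R}\to\mathbb{R}$ be a smooth periodic function with period $T>0$ and zero mean, $\frac1T\int_0^T g(t)\,dt=0$. For $\lambda>0$ consider the equation $$\ddot x=f(t)\sin x-(1+g(\lambda t))\cos x .$$ Then there exists $\lambda_0$ such that for every $\lambda\geqslant\lambda_0$ this equation has a solution $x(t)$ satisfying $x(t)\in(0,\pi)$ for all $t>0$.
   Context: The equation describes an inverted pendulum with a horizontally moving pivot point (horizontal forcing $f(t)$) in a gravity field oscillating as $1+g(\lambda t)$. *)

theory Defs
  imports "HOL-Analysis.Analysis"
begin

definition smooth_fun :: "(real \<Rightarrow> real) \<Rightarrow> bool" where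
  "smooth_fun h \<longleftrightarrow> (\<forall>n. \<forall>t. ((deriv ^^ n) h) differentiable (at t))"

end

theory Submission
  imports Defs
begin


lemma mvt_bound:
  fixes u u' :: "real \<Rightarrow> real"
  assumes ab: "a \<le> b" and d: "\<And>s. s \<in> {a..b} \<Longrightarrow> (u has_real_derivative u' s) (at s)"
    and bd: "\<And>s. s \<in> {a..b} \<Longrightarrow> \<bar>u' s\<bar> \<le> c"
  shows "\<bar>u b - u a\<bar> \<le> c * (b - a)"
proof -
  have b1: "u' s \<le> c" "0 \<le> c + u' s" if "a \<le> s" "s \<le> b" for s using bd[of s] that by auto
  have 1: "c * a - u a \<le> c * b - u b"
    by (rule deriv_nonneg_imp_mono[where g="\<lambda>s. c * s - u s" and g'="\<lambda>s. c - u' s"])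
       (auto intro!: DERIV_diff DERIV_add DERIV_cmult_right d DERIV_ident simp: ab b1)
  have 2: "c * a + u a \<le> c * b + u b"
    by (rule deriv_nonneg_imp_mono[where g="\<lambda>s. c * s + u s" and g'="\<lambda>s. c + u' s"])
       (auto intro!: DERIV_diff DERIV_add DERIV_cmult_right d DERIV_ident simp: ab b1)
  show ?thesis using 1 2 by (auto simp: algebra_simps abs_le_iff)
qed

lemma mvt_bound_abs:
  fixes u u' :: "real \<Rightarrow> real"
  assumes d: "\<And>s. (u has_real_derivative u' s) (at s)"
    and bd: "\<And>s. \<bar>u' s\<bar> \<le> c"
  shows "\<bar>u x - u y\<bar> \<le> c * \<bar>x - y\<bar>"
proof (cases "y \<le> x")
  case True then show ?thesis using mvt_bound[of y x u u' c] d bd by auto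
next
  case False then show ?thesis using mvt_bound[of x y u u' c] d bd by (auto simp: abs_minus_commute)
qed

lemma pow_bound:
  fixes u u' :: "real \<Rightarrow> real"
  assumes u0: "u 0 = 0" and d: "\<And>s. (u has_real_derivative u' s) (at s)"
    and bd: "\<And>s. \<bar>u' s\<bar> \<le> c * \<bar>s\<bar>^m"
  shows "\<bar>u t\<bar> \<le> c * \<bar>t\<bar>^(m+1) / (m+1)"
proof -
  have b1: "u' s \<le> c * s^m" "0 \<le> c * s^m + u' s" if "0 \<le> s" for s using bd[of s] that by auto
  have b2: "u' s \<le> c * (-s)^m" "- (c * (-s)^m) + u' s \<le> 0" "- (c * (-s)^m) - u' s \<le> 0" "- (c * (-s)^m) \<le> u' s" if "s \<le> 0" for s using bd[of s] that by auto
  define P where "P s = c / (m+1) * s^(m+1)" for s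
  define Q where "Q s = c / (m+1) * (-s)^(m+1)" for s
  have D: "(P has_real_derivative c * s^m) (at s)" for s unfolding P_def[abs_def]
    by (rule DERIV_cong[OF DERIV_cmult[OF DERIV_pow[of "m+1" s], of "c/(m+1)"]]) (simp add: field_simps)
  have E: "(Q has_real_derivative - (c * (-s)^m)) (at s)" for s unfolding Q_def[abs_def]
    by (rule DERIV_cong[OF DERIV_chain2[OF DERIV_cmult[OF DERIV_pow[of "m+1" "-s"], of "c/(m+1)"] DERIV_minus[OF DERIV_ident]]])
       (simp add: field_simps)
  show ?thesis
  proof (cases "t \<ge> 0")
    case True
    have 1: "P 0 - u 0 \<le> P t - u t"
      by (rule deriv_nonneg_imp_mono[where g="\<lambda>s. P s - u s" and g'="\<lambda>s. c * s^m - u' s"])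
         (use True in \<open>auto intro: DERIV_diff[OF D d] simp: b1\<close>)
    have 2: "P 0 + u 0 \<le> P t + u t"
      by (rule deriv_nonneg_imp_mono[where g="\<lambda>s. P s + u s" and g'="\<lambda>s. c * s^m + u' s"])
         (use True in \<open>auto intro: DERIV_add[OF D d] simp: b1\<close>)
    show ?thesis using 1 2 True u0 by (auto simp: abs_le_iff P_def)
  next
    case False
    have 1: "Q 0 - u 0 \<le> Q t - u t"
      by (rule deriv_nonpos_imp_antimono[where g="\<lambda>s. Q s - u s" and g'="\<lambda>s. - (c * (-s)^m) - u' s"])
         (use False in \<open>auto intro: DERIV_diff[OF E d] simp: b2\<close>)
    have 2: "Q 0 + u 0 \<le> Q t + u t"
      by (rule deriv_nonpos_imp_antimono[where g="\<lambda>s. Q s + u s" and g'="\<lambda>s. - (c * (-s)^m) + u' s"])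
         (use False in \<open>auto intro: DERIV_cong[OF DERIV_add[OF E d]] simp: b2\<close>)
    show ?thesis using 1 2 False u0 by (auto simp: abs_le_iff abs_if Q_def)
  qed
qed

definition prim :: "(real \<Rightarrow> real) \<Rightarrow> real \<Rightarrow> real" where
  "prim \<phi> t = integral {-(\<bar>t\<bar>+1)..t} \<phi> - integral {-(\<bar>t\<bar>+1)..0} \<phi>"

lemma prim0[simp]: "prim \<phi> 0 = 0" by (simp add: prim_def)

lemma int_shift:
  fixes \<phi> :: "real \<Rightarrow> real"
  assumes c: "continuous_on UNIV \<phi>" and "a \<le> t" "a \<le> 0" "m \<le> a"
  shows "integral {a..t} \<phi> - integral {a..0} \<phi> = integral {m..t} \<phi> - integral {m..0} \<phi>"
proof -
  have i: "\<phi> integrable_on {x..y}" for x y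
    by (rule integrable_continuous_interval, rule continuous_on_subset[OF c]) simp
  have "integral {m..a} \<phi> + integral {a..t} \<phi> = integral {m..t} \<phi>"
    using Henstock_Kurzweil_Integration.integral_combine[OF \<open>m \<le> a\<close> \<open>a \<le> t\<close> i] .
  moreover have "integral {m..a} \<phi> + integral {a..0} \<phi> = integral {m..0} \<phi>"
    using Henstock_Kurzweil_Integration.integral_combine[OF \<open>m \<le> a\<close> \<open>a \<le> 0\<close> i] .
  ultimately show ?thesis by linarith
qed

lemma prim_eq:
  fixes \<phi> :: "real \<Rightarrow> real"
  assumes c: "continuous_on UNIV \<phi>" and "a \<le> t" "a \<le> 0"
  shows "prim \<phi> t = integral {a..t} \<phi> - integral {a..0} \<phi>"
proof -
  let ?m = "min a (-(\<bar>t\<bar>+1))"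
  show ?thesis unfolding prim_def
    using int_shift[OF c, of a t ?m] int_shift[OF c, of "-(\<bar>t\<bar>+1)" t ?m] assms by auto
qed

lemma prim_deriv:
  fixes \<phi> :: "real \<Rightarrow> real"
  assumes c: "continuous_on UNIV \<phi>"
  shows "(prim \<phi> has_real_derivative \<phi> t) (at t)"
proof -
  define a where "a = -(\<bar>t\<bar>+2)"
  define b where "b = \<bar>t\<bar>+2"
  have tin: "t \<in> {a..b}" and tint: "t \<in> interior {a..b}" by (auto simp: a_def b_def)
  have "((\<lambda>x. integral {a..x} \<phi>) has_real_derivative \<phi> t) (at t within {a..b})"
    by (rule integral_has_real_derivative[OF continuous_on_subset[OF c] tin]) auto
  then have "((\<lambda>x. integral {a..x} \<phi>) has_real_derivative \<phi> t) (at t)"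
    using at_within_interior[OF tint] by simp
  then have "((\<lambda>x. integral {a..x} \<phi> - integral {a..0} \<phi>) has_real_derivative \<phi> t) (at t)"
    by (rule DERIV_cong[OF DERIV_diff[OF _ DERIV_const]]) simp
  then show ?thesis
  proof (rule has_field_derivative_transform_within_open[where S="{a<..<b}"])
    fix x assume "x \<in> {a<..<b}"
    then have "a \<le> x" "a \<le> 0" by (auto simp: a_def)
    then show "integral {a..x} \<phi> - integral {a..0} \<phi> = prim \<phi> x" by (simp add: prim_eq[OF c])
  qed (auto simp: a_def b_def)
qed

lemma deriv_cont: "(\<And>t. (u has_real_derivative u' t) (at t)) \<Longrightarrow> continuous_on UNIV u"
  by (meson DERIV_isCont continuous_at_imp_continuous_on)

lemma mvt_bound0:
  fixes u u' :: "real \<Rightarrow> real"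
  assumes d: "\<And>s. \<bar>s\<bar> \<le> N \<Longrightarrow> (u has_real_derivative u' s) (at s)"
    and bd: "\<And>s. \<bar>s\<bar> \<le> N \<Longrightarrow> \<bar>u' s\<bar> \<le> c" and t: "\<bar>t\<bar> \<le> N"
  shows "\<bar>u t - u 0\<bar> \<le> c * \<bar>t\<bar>"
proof (cases "t \<ge> 0")
  case True then show ?thesis using mvt_bound[of 0 t u u' c] d bd t by auto
next
  case False then show ?thesis using mvt_bound[of t 0 u u' c] d bd t by (auto simp: abs_minus_commute)
qed

primrec pic :: "(real \<Rightarrow> real \<Rightarrow> real) \<Rightarrow> real \<Rightarrow> real \<Rightarrow> nat \<Rightarrow> real \<Rightarrow> real" where
  "pic F a v 0 = (\<lambda>t. a + v * t)"
| "pic F a v (Suc k) = (\<lambda>t. a + v * t + prim (prim (\<lambda>s. F s (pic F a v k s))) t)"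

declare pic.simps(2)[simp del]

locale ode =
  fixes F :: "real \<Rightarrow> real \<Rightarrow> real" and L B :: real
  assumes contF: "\<And>u. continuous_on UNIV u \<Longrightarrow> continuous_on UNIV (\<lambda>t. F t (u t))"
    and lip: "\<And>t x y. \<bar>F t x - F t y\<bar> \<le> L * \<bar>x - y\<bar>"
    and bnd: "\<And>t x. \<bar>F t x\<bar> \<le> B"
begin

lemma L_nonneg: "L \<ge> 0" using lip[of 0 1 0] by auto
lemma B_nonneg: "B \<ge> 0" using bnd[of 0 0] by auto

lemma pic_cont: "continuous_on UNIV (pic F a v k)"
proof (induction k)
  case 0 then show ?case by (auto intro!: continuous_intros)
next
  case (Suc k)
  have c1: "continuous_on UNIV (\<lambda>s. F s (pic F a v k s))" by (rule contF[OF Suc])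
  have c2: "continuous_on UNIV (prim (\<lambda>s. F s (pic F a v k s)))" by (rule deriv_cont[OF prim_deriv[OF c1]])
  have c3: "continuous_on UNIV (prim (prim (\<lambda>s. F s (pic F a v k s))))" by (rule deriv_cont[OF prim_deriv[OF c2]])
  show ?case using c3 unfolding pic.simps(2) by (auto intro!: continuous_intros)
qed

abbreviation "G a v k \<equiv> (\<lambda>s. F s (pic F a v k s))"

lemma G_cont: "continuous_on UNIV (G a v k)" by (rule contF[OF pic_cont])

lemma primG_cont: "continuous_on UNIV (prim (G a v k))" by (rule deriv_cont[OF prim_deriv[OF G_cont]])

lemma dprimG: "(prim (G a v k) has_real_derivative G a v k t) (at t)"
  by (rule prim_deriv[OF G_cont])

lemma dprimprimG: "(prim (prim (G a v k)) has_real_derivative prim (G a v k) t) (at t)"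
  by (rule prim_deriv[OF primG_cont])

lemma pic_diff_bound:
  "\<bar>pic F a v (Suc k) t - pic F a v k t\<bar> \<le> B * L^k * \<bar>t\<bar>^(2*k+2) / fact (2*k+2)"
proof (induction k arbitrary: t)
  case 0
  have 1: "\<bar>prim (G a v 0) s\<bar> \<le> B * \<bar>s\<bar>^1" for s
    using pow_bound[OF prim0 dprimG[of a v 0], where c=B and m=0] bnd by simp
  have 2: "\<bar>prim (prim (G a v 0)) t\<bar> \<le> B * \<bar>t\<bar>^2 / 2"
    using pow_bound[OF prim0 dprimprimG[of a v 0], where c=B and m=1] 1 by (simp add: power2_eq_square pic.simps(2))
  show ?case using 2 by (simp add: numeral_2_eq_2 pic.simps(2))
next
  case (Suc k)
  define c where "c = B * L^(Suc k) / fact (2*k+2)"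
  define w where "w = (\<lambda>s. prim (G a v (Suc k)) s - prim (G a v k) s)"
  define u where "u = (\<lambda>s. prim (prim (G a v (Suc k))) s - prim (prim (G a v k)) s)"
  have dw: "(w has_real_derivative G a v (Suc k) s - G a v k s) (at s)" for s
    unfolding w_def by (intro DERIV_diff dprimG)
  have du: "(u has_real_derivative w s) (at s)" for s
    unfolding u_def w_def by (intro DERIV_diff dprimprimG)
  have b0: "\<bar>G a v (Suc k) s - G a v k s\<bar> \<le> c * \<bar>s\<bar>^(2*k+2)" for s
  proof -
    have "\<bar>G a v (Suc k) s - G a v k s\<bar> \<le> L * \<bar>pic F a v (Suc k) s - pic F a v k s\<bar>" by (rule lip)
    also have "\<dots> \<le> L * (B * L^k * \<bar>s\<bar>^(2*k+2) / fact (2*k+2))"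
      by (rule mult_left_mono[OF Suc.IH L_nonneg])
    also have "\<dots> = c * \<bar>s\<bar>^(2*k+2)" by (simp add: c_def)
    finally show ?thesis .
  qed
  have b1: "\<bar>w s\<bar> \<le> (c / (2*k+3)) * \<bar>s\<bar>^(2*k+3)" for s
    using pow_bound[OF _ dw b0, where t=s] by (simp add: w_def numeral_3_eq_3 algebra_simps)
  have b2: "\<bar>u t\<bar> \<le> (c / (2*k+3)) * \<bar>t\<bar>^(2*k+3+1) / (2*k+3+1)"
    using pow_bound[OF _ du b1, where t=t] by (simp add: u_def numeral_3_eq_3 algebra_simps)
  have e: "2 * Suc k + 2 = 2*k+3+1" by simp
  have E: "fact (2*k+3+1) = (real (2*k+3+1) * real (2*k+3)) * (fact (2*k+2) :: real)"
    by (simp add: algebra_simps fact_Suc numeral_2_eq_2 numeral_3_eq_3)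
  define X where "X = \<bar>t\<bar>^(2*k+3+1)"
  have "(c / (2*k+3)) * X / (2*k+3+1) = B * L^(Suc k) * X / fact (2*k+3+1)"
    unfolding E c_def by (simp add: field_simps)
  then have "(c / (2*k+3)) * \<bar>t\<bar>^(2*k+3+1) / (2*k+3+1) = B * L^(Suc k) * \<bar>t\<bar>^(2*Suc k+2) / fact (2*Suc k+2)"
    unfolding e X_def .
  moreover have "pic F a v (Suc (Suc k)) t - pic F a v (Suc k) t = u t" by (simp add: u_def pic.simps(2))
  ultimately show ?case using b2 by simp
qed

definition bd :: "nat \<Rightarrow> real \<Rightarrow> real" where
  "bd k N = B * L^k * N^(2*k+2) / fact (2*k+2)"

lemma bd_nonneg: "N \<ge> 0 \<Longrightarrow> bd k N \<ge> 0"
  using B_nonneg L_nonneg by (simp add: bd_def)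

lemma bd_mono: "0 \<le> M \<Longrightarrow> M \<le> N \<Longrightarrow> bd k M \<le> bd k N"
  unfolding bd_def using B_nonneg L_nonneg
  by (intro divide_right_mono mult_left_mono power_mono) auto

lemma bd_summable: assumes N: "N \<ge> 0" shows "summable (\<lambda>k. bd k N)"
proof (rule summable_comparison_test')
  show "summable (\<lambda>k. B * N^2 * (inverse (fact k) * (L * N^2)^k))"
    by (intro summable_mult summable_exp)
  fix k :: nat
  have f: "fact k \<le> (fact (2*k+2) :: real)" by (rule fact_mono) simp
  have fp: "(0::real) < fact k" by simp
  have pw: "N^(2*k+2) = N^2 * (N^2)^k"
    by (metis power_add power_mult mult.commute)
  have "bd k N = (B * N^2 * (L * N^2)^k) / fact (2*k+2)"
    unfolding bd_def pw power_mult_distrib by (simp only: mult_ac)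
  also have "\<dots> \<le> (B * N^2 * (L * N^2)^k) / fact k"
    using B_nonneg L_nonneg N f fp by (intro divide_left_mono) auto
  also have "\<dots> = B * N^2 * (inverse (fact k) * (L * N^2)^k)" by (simp add: field_simps)
  finally show "norm (bd k N) \<le> B * N^2 * (inverse (fact k) * (L * N^2)^k)"
    using bd_nonneg[OF N] by simp
qed

abbreviation "P a v \<equiv> pic F a v"

lemma diff_le_bd: "\<bar>t\<bar> \<le> N \<Longrightarrow> \<bar>P a v (Suc k) t - P a v k t\<bar> \<le> bd k N"
  using pic_diff_bound[of a v k t] bd_mono[of "\<bar>t\<bar>" N k] by (simp add: bd_def)

lemma diff_summable: "summable (\<lambda>k. P a v (Suc k) t - P a v k t)"
  by (rule summable_comparison_test'[OF bd_summable[of "\<bar>t\<bar>"]]) (simp, metis diff_le_bd real_norm_def order_refl)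

definition X :: "real \<Rightarrow> real \<Rightarrow> real \<Rightarrow> real" where
  "X a v t = P a v 0 t + (\<Sum>k. P a v (Suc k) t - P a v k t)"

lemma pic_tendsto: "(\<lambda>k. P a v k t) \<longlonglongrightarrow> X a v t"
proof -
  have "(\<lambda>k. P a v 0 t + (\<Sum>j<k. P a v (Suc j) t - P a v j t)) \<longlonglongrightarrow> X a v t"
    unfolding X_def by (intro tendsto_add tendsto_const summable_LIMSEQ diff_summable)
  moreover have "P a v 0 t + (\<Sum>j<k. P a v (Suc j) t - P a v j t) = P a v k t" for k
    by (subst sum_lessThan_telescope) simp
  ultimately show ?thesis by simp
qed

lemma tail_bound:
  assumes "\<bar>t\<bar> \<le> N"
  shows "\<bar>X a v t - P a v k t\<bar> \<le> (\<Sum>j. bd (j+k) N)"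
proof -
  let ?d = "\<lambda>j. P a v (Suc j) t - P a v j t"
  have N: "N \<ge> 0" using assms by auto
  have "X a v t - P a v k t = (\<Sum>j. ?d j) - (\<Sum>j<k. ?d j)"
    unfolding X_def by (subst sum_lessThan_telescope) simp
  also have "\<dots> = (\<Sum>j. ?d (j+k))"
    using suminf_split_initial_segment[OF diff_summable, of a v t k] by simp
  finally have eq: "X a v t - P a v k t = (\<Sum>j. ?d (j+k))" .
  have s1: "summable (\<lambda>j. bd (j+k) N)"
    using summable_ignore_initial_segment[OF bd_summable[OF N], of k] .
  have s2: "summable (\<lambda>j. norm (?d (j+k)))"
    by (rule summable_comparison_test'[OF s1]) (simp add: assms diff_le_bd)
  have "\<bar>\<Sum>j. ?d (j+k)\<bar> \<le> (\<Sum>j. norm (?d (j+k)))"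
    using summable_norm[OF s2] by simp
  also have "\<dots> \<le> (\<Sum>j. bd (j+k) N)"
    by (rule suminf_le[OF _ s2 s1]) (metis assms diff_le_bd real_norm_def)
  finally show ?thesis using eq by simp
qed

lemma tail_tendsto:
  assumes N: "N \<ge> 0"
  shows "(\<lambda>k. \<Sum>j. bd (j+k) N) \<longlonglongrightarrow> 0"
proof -
  have "(\<lambda>k. (\<Sum>j. bd j N) - (\<Sum>j<k. bd j N)) \<longlonglongrightarrow> (\<Sum>j. bd j N) - (\<Sum>j. bd j N)"
    by (intro tendsto_diff tendsto_const summable_LIMSEQ bd_summable N)
  moreover have "(\<Sum>j. bd j N) - (\<Sum>j<k. bd j N) = (\<Sum>j. bd (j+k) N)" for k
    using suminf_split_initial_segment[OF bd_summable[OF N], of k] by simp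
  ultimately show ?thesis by simp
qed

lemma primG_bound: "\<bar>prim (G a v k) t\<bar> \<le> B * \<bar>t\<bar>"
  using pow_bound[OF prim0 dprimG[of a v k], where c=B and m=0 and t=t] bnd by simp

lemma pic_deriv_bound:
  "\<exists>D. (P a v k has_real_derivative D) (at t) \<and> \<bar>D\<bar> \<le> \<bar>v\<bar> + B * \<bar>t\<bar>"
proof (cases k)
  case 0 then show ?thesis using B_nonneg
    by (intro exI[of _ v]) (auto intro!: derivative_eq_intros)
next
  case (Suc j)
  have "(P a v k has_real_derivative v + prim (G a v j) t) (at t)"
    unfolding Suc pic.simps(2) by (auto intro!: derivative_eq_intros dprimprimG)
  moreover have "\<bar>v + prim (G a v j) t\<bar> \<le> \<bar>v\<bar> + B * \<bar>t\<bar>"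
    using primG_bound[of a v j t] by linarith
  ultimately show ?thesis by blast
qed

lemma pic_lip:
  assumes "\<bar>s\<bar> \<le> N" "\<bar>s'\<bar> \<le> N"
  shows "\<bar>P a v k s - P a v k s'\<bar> \<le> (\<bar>v\<bar> + B * N) * \<bar>s - s'\<bar>"
proof -
  obtain D where D: "\<And>t. (P a v k has_real_derivative D t) (at t)" "\<And>t. \<bar>D t\<bar> \<le> \<bar>v\<bar> + B * \<bar>t\<bar>"
    using pic_deriv_bound[of a v k] by metis
  have bnd': "\<bar>D t\<bar> \<le> \<bar>v\<bar> + B * N" if "t \<in> {min s s'..max s s'}" for t
  proof -
    have "\<bar>t\<bar> \<le> N" using that assms by auto
    then show ?thesis using D(2)[of t] B_nonneg mult_left_mono[of "\<bar>t\<bar>" N B] by linarith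
  qed
  have "\<bar>P a v k (max s s') - P a v k (min s s')\<bar> \<le> (\<bar>v\<bar> + B * N) * (max s s' - min s s')"
    by (rule mvt_bound[OF _ D(1) bnd']) auto
  then show ?thesis by (cases "s \<le> s'") (auto simp: abs_minus_commute)
qed

lemma X_lip:
  assumes "\<bar>s\<bar> \<le> N" "\<bar>s'\<bar> \<le> N"
  shows "\<bar>X a v s - X a v s'\<bar> \<le> (\<bar>v\<bar> + B * N) * \<bar>s - s'\<bar>"
proof (rule LIMSEQ_le_const2)
  show "(\<lambda>k. \<bar>P a v k s - P a v k s'\<bar>) \<longlonglongrightarrow> \<bar>X a v s - X a v s'\<bar>"
    by (intro tendsto_intros pic_tendsto)
qed (use pic_lip[OF assms] in auto)

lemma X_cont: "continuous_on UNIV (X a v)"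
proof -
  have "isCont (X a v) t0" for t0
  proof -
    define N where "N = \<bar>t0\<bar> + 1"
    have "lipschitz_on (\<bar>v\<bar> + B * N) {-N..N} (X a v)"
      by (rule lipschitz_onI) (use X_lip B_nonneg in \<open>auto simp: dist_real_def N_def\<close>)
    then have "continuous_on {-N..N} (X a v)" by (rule lipschitz_on_continuous_on)
    moreover have "t0 \<in> interior {-N..N}" by (auto simp: N_def)
    ultimately show ?thesis using continuous_on_interior by blast
  qed
  then show ?thesis by (simp add: continuous_at_imp_continuous_on)
qed

lemma ode_exists:
  "\<exists>x x'. x 0 = a \<and> x' 0 = v \<and> (\<forall>t. (x has_real_derivative x' t) (at t)) \<and>
     (\<forall>t. (x' has_real_derivative F t (x t)) (at t))"
proof -
  define Gx where "Gx = (\<lambda>s. F s (X a v s))"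
  have cG: "continuous_on UNIV Gx" unfolding Gx_def by (rule contF[OF X_cont])
  have cpG: "continuous_on UNIV (prim Gx)" by (rule deriv_cont[OF prim_deriv[OF cG]])
  define Y where "Y = (\<lambda>t. a + v * t + prim (prim Gx) t)"
  have XY: "X a v t = Y t" for t
  proof -
    define N where "N = \<bar>t\<bar>"
    have N0: "N \<ge> 0" by (simp add: N_def)
    have Nt: "\<bar>t\<bar> \<le> N" by (simp add: N_def)
    define tl where "tl = (\<lambda>k. \<Sum>j. bd (j+k) N)"
    have key: "\<bar>P a v (Suc k) t - Y t\<bar> \<le> L * tl k * N * N" for k
    proof -
      define w where "w = (\<lambda>s. prim (G a v k) s - prim Gx s)"
      define u where "u = (\<lambda>s. prim (prim (G a v k)) s - prim (prim Gx) s)"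
      have dw: "(w has_real_derivative G a v k s - Gx s) (at s)" for s
        unfolding w_def by (intro DERIV_diff dprimG prim_deriv cG)
      have du: "(u has_real_derivative w s) (at s)" for s
        unfolding u_def w_def by (intro DERIV_diff dprimprimG prim_deriv cpG)
      have b0: "\<bar>G a v k s - Gx s\<bar> \<le> L * tl k" if "\<bar>s\<bar> \<le> N" for s
      proof -
        have "\<bar>G a v k s - Gx s\<bar> \<le> L * \<bar>P a v k s - X a v s\<bar>" unfolding Gx_def by (rule lip)
        also have "\<dots> \<le> L * tl k"
          using tail_bound[OF that, of a v k] L_nonneg unfolding tl_def
          by (intro mult_left_mono) (auto simp: abs_minus_commute)
        finally show ?thesis .
      qed
      have b1: "\<bar>w s\<bar> \<le> L * tl k * N" if "\<bar>s\<bar> \<le> N" for s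
      proof -
        have "\<bar>w s - w 0\<bar> \<le> L * tl k * \<bar>s\<bar>" by (rule mvt_bound0[OF dw b0 that])
        moreover have "L * tl k \<ge> 0" using b0[of 0] N0 abs_ge_zero[of "G a v k 0 - Gx 0"] by linarith
        moreover have "w 0 = 0" by (simp add: w_def)
        moreover have "L * tl k * \<bar>s\<bar> \<le> L * tl k * N" by (rule mult_left_mono[OF that]) fact
        ultimately show ?thesis by linarith
      qed
      have "\<bar>u t - u 0\<bar> \<le> L * tl k * N * \<bar>t\<bar>" by (rule mvt_bound0[OF du b1 Nt])
      moreover have "u 0 = 0" by (simp add: u_def)
      moreover have "P a v (Suc k) t - Y t = u t" unfolding pic.simps(2) u_def Y_def by simp
      ultimately show ?thesis unfolding N_def by simp
    qed
    have tl0: "tl \<longlonglongrightarrow> 0" unfolding tl_def by (rule tail_tendsto[OF N0])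
    have "(\<lambda>k. L * tl k * N * N) \<longlonglongrightarrow> L * 0 * N * N"
      by (intro tendsto_intros tl0)
    then have lim0: "(\<lambda>k. L * tl k * N * N) \<longlonglongrightarrow> 0" by simp
    have ev: "\<forall>k. norm (P a v (Suc k) t - Y t) \<le> L * tl k * N * N" using key by simp
    have "(\<lambda>k. P a v (Suc k) t - Y t) \<longlonglongrightarrow> 0"
      by (rule Lim_null_comparison[OF always_eventually[OF ev] lim0])
    moreover have "(\<lambda>k. P a v (Suc k) t - Y t) \<longlonglongrightarrow> X a v t - Y t"
      by (intro tendsto_diff tendsto_const LIMSEQ_Suc pic_tendsto)
    ultimately show ?thesis using LIMSEQ_unique by fastforce
  qed
  have XYf: "X a v = Y" using XY by auto
  show ?thesis
  proof (intro exI conjI allI)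
    show "X a v 0 = a" unfolding XYf Y_def by simp
    show "(\<lambda>t. v + prim Gx t) 0 = v" by simp
    fix t
    show "(X a v has_real_derivative v + prim Gx t) (at t)"
      unfolding XYf Y_def by (auto intro!: derivative_eq_intros prim_deriv cpG)
    show "((\<lambda>t. v + prim Gx t) has_real_derivative F t (X a v t)) (at t)"
      using prim_deriv[OF cG, of t] unfolding Gx_def by (auto intro!: derivative_eq_intros)
  qed
qed

lemma dep:
  assumes d1: "\<And>t. (x1 has_real_derivative x1' t) (at t)" "\<And>t. (x1' has_real_derivative F t (x1 t)) (at t)"
    and d2: "\<And>t. (x2 has_real_derivative x2' t) (at t)" "\<And>t. (x2' has_real_derivative F t (x2 t)) (at t)"
    and init: "x1 0 = x2 0" and t: "t \<ge> 0"
  shows "\<bar>x1 t - x2 t\<bar> \<le> \<bar>x1' 0 - x2' 0\<bar> * exp ((1 + L) * t)"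
proof -
  define c where "c = 1 + L"
  define E where "E = (\<lambda>s. (x1 s - x2 s)^2 + (x1' s - x2' s)^2)"
  define E' where "E' = (\<lambda>s. 2 * (x1 s - x2 s) * (x1' s - x2' s) + 2 * (x1' s - x2' s) * (F s (x1 s) - F s (x2 s)))"
  have dE: "(E has_real_derivative E' s) (at s)" for s
    unfolding E_def E'_def
    by (auto intro!: derivative_eq_intros d1 d2 simp: algebra_simps)
  have E'le: "E' s \<le> c * E s" for s
  proof -
    define d where "d = x1 s - x2 s"
    define e where "e = x1' s - x2' s"
    define f where "f = F s (x1 s) - F s (x2 s)"
    have fl: "\<bar>f\<bar> \<le> L * \<bar>d\<bar>" unfolding f_def d_def by (rule lip)
    have 1: "2 * d * e \<le> d^2 + e^2" using sum_squares_bound[of d e] by (simp add: power2_eq_square) 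
    have "e * f \<le> \<bar>e\<bar> * \<bar>f\<bar>" by (metis abs_ge_self abs_mult)
    also have "\<dots> \<le> \<bar>e\<bar> * (L * \<bar>d\<bar>)" by (rule mult_left_mono[OF fl]) simp
    finally have 2: "e * f \<le> L * (\<bar>d\<bar> * \<bar>e\<bar>)" by (simp add: mult_ac)
    have 3: "2 * (\<bar>d\<bar> * \<bar>e\<bar>) \<le> d^2 + e^2"
      using sum_squares_bound[of "\<bar>d\<bar>" "\<bar>e\<bar>"] by (simp add: power2_eq_square)
    have 4: "L * (2 * (\<bar>d\<bar> * \<bar>e\<bar>)) \<le> L * (d^2 + e^2)"
      by (rule mult_left_mono[OF 3 L_nonneg])
    have "E' s = 2 * d * e + 2 * (e * f)" unfolding E'_def d_def e_def f_def by simp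
    also have "\<dots> \<le> (d^2 + e^2) + L * (d^2 + e^2)" using 1 2 4 by linarith
    also have "\<dots> = c * E s" unfolding c_def E_def d_def e_def by (simp add: algebra_simps)
    finally show ?thesis .
  qed
  define \<Phi> where "\<Phi> = (\<lambda>s. E s * exp (- c * s))"
  have ex: "((\<lambda>s. exp (- c * s)) has_real_derivative exp (- c * s) * (- c)) (at s)" for s
    by (auto intro!: derivative_eq_intros)
  have dPhi: "(\<Phi> has_real_derivative (E' s - c * E s) * exp (- c * s)) (at s)" for s
    unfolding \<Phi>_def by (rule DERIV_cong[OF DERIV_mult[OF dE ex]]) (simp add: algebra_simps)
  have "\<Phi> t \<le> \<Phi> 0"
  proof (rule deriv_nonpos_imp_antimono[OF dPhi])
    fix s show "(E' s - c * E s) * exp (- c * s) \<le> 0"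
      using E'le[of s] by (intro mult_nonpos_nonneg) auto
  qed (use t in auto)
  then have 0: "E t * exp (- c * t) \<le> E 0" by (simp add: \<Phi>_def)
  have eq: "E t = (E t * exp (- c * t)) * exp (c * t)"
  proof -
    have "exp (- c * t) * exp (c * t) = exp (- c * t + c * t)" by (rule exp_add[symmetric])
    also have "\<dots> = 1" by simp
    finally have "exp (- c * t) * exp (c * t) = 1" .
    then show ?thesis by (metis mult.assoc mult.right_neutral)
  qed
  have Et: "E t \<le> E 0 * exp (c * t)"
    by (subst eq, rule mult_right_mono[OF 0]) simp
  define e0 where "e0 = x1' 0 - x2' 0"
  define q where "q = exp (c * t)"
  have q1: "1 \<le> q" using c_def L_nonneg t q_def by simp
  have E0: "E 0 = e0^2" unfolding E_def e0_def using init by simp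
  have "(x1 t - x2 t)^2 \<le> E t" unfolding E_def by simp
  also have "\<dots> \<le> e0^2 * q" using Et E0 q_def by simp
  also have "\<dots> \<le> e0^2 * q^2"
    by (rule mult_left_mono) (use q1 in \<open>auto simp: power2_eq_square\<close>)
  also have "\<dots> = (\<bar>e0\<bar> * q)^2" by (simp add: power_mult_distrib)
  finally have sq: "\<bar>x1 t - x2 t\<bar>^2 \<le> (\<bar>e0\<bar> * q)^2" by simp
  have "\<bar>x1 t - x2 t\<bar> \<le> \<bar>e0\<bar> * q"
    by (rule power2_le_imp_le[OF sq]) (use q1 in simp)
  then show ?thesis unfolding e0_def q_def c_def .
qed

end




lemma one_minus_cos_le: "1 - cos (y::real) \<le> y^2 / 2"
proof -
  have "cos y = cos (2 * (y/2))" by simp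
  also have "\<dots> = 1 - 2 * sin (y/2) ^ 2" by (rule cos_double_sin)
  finally have "1 - cos y = 2 * sin (y/2)^2" by simp
  also have "\<dots> \<le> 2 * (y/2)^2"
  proof -
    have "sin (y/2)^2 \<le> (y/2)^2" using abs_sin_x_le_abs_x[of "y/2"] abs_le_square_iff by blast
    then show ?thesis by simp
  qed
  finally show ?thesis by (simp add: power2_eq_square)
qed

lemma accel_neg:
  fixes f h y Mf Mh \<delta> :: real
  assumes "\<bar>f\<bar> \<le> Mf" "\<bar>h\<bar> \<le> Mh" "0 \<le> y" "y \<le> 2 * \<delta>" "0 < \<delta>" "\<delta> \<le> 1/4"
    and "\<delta> * (Mf + Mh + 1) \<le> 1/4"
  shows "f * sin y - cos y + h * (1 - cos y) < 0"
proof -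
  have Mf: "Mf \<ge> 0" "Mh \<ge> 0" using assms by auto
  have s: "0 \<le> sin y" "sin y \<le> y" using sin_x_le_x[of y] assms sin_ge_zero[of y] pi_gt3 by auto
  have c: "0 \<le> 1 - cos y" "1 - cos y \<le> y^2/2" using one_minus_cos_le[of y] by auto
  have y2: "y^2 \<le> (2*\<delta>)^2" using assms by (intro power_mono) auto
  have a1: "f * sin y \<le> 2 * (\<delta> * Mf)"
  proof -
    have "f * sin y \<le> \<bar>f\<bar> * sin y" using s by (intro mult_right_mono) auto
    also have "\<dots> \<le> Mf * (2 * \<delta>)" using s assms by (intro mult_mono) auto
    finally show ?thesis by (simp add: algebra_simps)
  qed
  have yy: "y^2/2 \<le> \<delta>/2"
  proof -
    have "y^2/2 \<le> 2*\<delta>^2" using y2 by (simp add: power2_eq_square)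
    also have "\<dots> \<le> 2*\<delta>*(1/4)" using assms by (simp add: power2_eq_square)
    finally show ?thesis by simp
  qed
  have a3: "1 - cos y \<le> \<delta>/2" using c yy by linarith
  have a2: "h * (1 - cos y) \<le> (\<delta> * Mh) / 2"
  proof -
    have "h * (1 - cos y) \<le> \<bar>h\<bar> * (1 - cos y)" using c by (intro mult_right_mono) auto
    also have "\<dots> \<le> Mh * (\<delta>/2)" using c a3 assms by (intro mult_mono) auto
    finally show ?thesis by (simp add: algebra_simps)
  qed
  have a4: "\<delta> * Mh \<ge> 0" using Mf assms by simp
  have a5: "\<delta> * Mf + \<delta> * Mh + \<delta> \<le> 1/4" using assms(7) by (simp add: algebra_simps)
  show ?thesis using a1 a2 a3 a4 a5 assms(5) by linarith
qed

lemma concave_touch: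
  fixes w w1 w2 :: "real \<Rightarrow> real"
  assumes d1: "\<And>s. (w has_real_derivative w1 s) (at s)" and d2: "\<And>s. (w1 has_real_derivative w2 s) (at s)"
    and neg: "\<And>s. \<bar>s - t0\<bar> < e \<Longrightarrow> w2 s \<le> 0" and r: "0 \<le> r" "r < e"
  shows "w (t0 + r) + w (t0 - r) \<le> 2 * w t0"
proof -
  have dphi: "((\<lambda>s. w (t0 + s) + w (t0 - s)) has_real_derivative w1 (t0 + s) - w1 (t0 - s)) (at s)" for s
  proof -
    have e1: "((\<lambda>s. w (t0 + s)) has_real_derivative w1 (t0 + s) * 1) (at s)"
      by (rule DERIV_chain2[OF d1]) (auto intro!: derivative_eq_intros)
    have e2: "((\<lambda>s. w (t0 - s)) has_real_derivative w1 (t0 - s) * (-1)) (at s)"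
      by (rule DERIV_chain2[OF d1]) (auto intro!: derivative_eq_intros)
    show ?thesis by (rule DERIV_cong[OF DERIV_add[OF e1 e2]]) simp
  qed
  have "w (t0 + r) + w (t0 - r) \<le> w (t0 + 0) + w (t0 - 0)"
  proof (rule deriv_nonpos_imp_antimono[OF dphi])
    fix s assume s: "s \<in> {0..r}"
    have "w1 (t0 + s) \<le> w1 (t0 - s)"
    proof (rule deriv_nonpos_imp_antimono[OF d2])
      fix u assume "u \<in> {t0 - s..t0 + s}"
      then show "w2 u \<le> 0" using s r by (intro neg) auto
    qed (use s in auto)
    then show "w1 (t0 + s) - w1 (t0 - s) \<le> 0" by simp
  qed (use r in auto)
  then show ?thesis by simp
qed

context ode begin

lemma quad_bound:
  assumes d: "\<And>t. (x has_real_derivative x' t) (at t)" "\<And>t. (x' has_real_derivative F t (x t)) (at t)"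
  shows "\<bar>x t - x 0 - x' 0 * t\<bar> \<le> B * t^2 / 2"
proof -
  have du1: "((\<lambda>s. x' s - x' 0) has_real_derivative F s (x s)) (at s)" for s
    by (rule DERIV_cong[OF DERIV_diff[OF d(2) DERIV_const]]) simp
  have b1: "\<bar>F s (x s)\<bar> \<le> B * \<bar>s\<bar>^0" for s using bnd by simp
  have 1: "\<bar>x' s - x' 0\<bar> \<le> B * \<bar>s\<bar>^1" for s
    using pow_bound[where u="\<lambda>s. x' s - x' 0", OF _ du1 b1, of s] by simp
  have du2: "((\<lambda>t. x t - x 0 - x' 0 * t) has_real_derivative x' s - x' 0) (at s)" for s
    by (rule DERIV_cong[OF DERIV_diff[OF DERIV_diff[OF d(1) DERIV_const] DERIV_cmult[OF DERIV_ident]]]) simp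
  show ?thesis
    using pow_bound[where u="\<lambda>t. x t - x 0 - x' 0 * t", OF _ du2 1, of t] by (simp add: power2_eq_square)
qed

end

lemma open_exit:
  fixes y :: "real \<Rightarrow> real \<Rightarrow> real" and a b :: "real \<Rightarrow> real"
  assumes dep: "\<And>v v' s. s \<ge> 0 \<Longrightarrow> \<bar>y v' s - y v s\<bar> \<le> \<bar>v' - v\<bar> * exp (K * s)"
    and K: "K \<ge> 0"
    and cy: "\<And>v. continuous_on UNIV (y v)" and cb: "continuous_on UNIV b"
  shows "open {v. \<exists>t\<ge>0. y v t + a t < c1 \<and> (\<forall>s\<in>{0..t}. y v s + b s < c2)}"
proof (rule openI)
  fix v assume "v \<in> {v. \<exists>t\<ge>0. y v t + a t < c1 \<and> (\<forall>s\<in>{0..t}. y v s + b s < c2)}"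
  then obtain t where t: "t \<ge> 0" "y v t + a t < c1" "\<forall>s\<in>{0..t}. y v s + b s < c2" by auto
  have "continuous_on {0..t} (\<lambda>s. y v s + b s)"
    by (intro continuous_intros continuous_on_subset[OF cy] continuous_on_subset[OF cb]) auto
  then obtain m where m: "m \<in> {0..t}" "\<forall>s\<in>{0..t}. y v s + b s \<le> y v m + b m"
    using continuous_attains_sup[of "{0..t}" "\<lambda>s. y v s + b s"] t by auto
  define \<eta> where "\<eta> = min (c1 - (y v t + a t)) (c2 - (y v m + b m))"
  have eta: "\<eta> > 0" using t m by (auto simp: \<eta>_def)
  define r where "r = \<eta> / exp (K * t)"
  have r: "r > 0" using eta by (simp add: r_def)
  show "\<exists>e>0. ball v e \<subseteq> {v. \<exists>t\<ge>0. y v t + a t < c1 \<and> (\<forall>s\<in>{0..t}. y v s + b s < c2)}"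
  proof (intro exI conjI subsetI)
    show "r > 0" by (fact r)
    fix v' assume "v' \<in> ball v r"
    then have vv: "\<bar>v' - v\<bar> < r" by (simp add: dist_real_def abs_minus_commute)
    have close: "\<bar>y v' s - y v s\<bar> < \<eta>" if "s \<in> {0..t}" for s
    proof -
      have "\<bar>y v' s - y v s\<bar> \<le> \<bar>v' - v\<bar> * exp (K * s)" using that by (intro dep) auto
      also have "\<dots> \<le> \<bar>v' - v\<bar> * exp (K * t)" using that K by (intro mult_left_mono) (auto intro: mult_left_mono)
      also have "\<dots> < r * exp (K * t)" using vv by simp
      also have "\<dots> = \<eta>" by (simp add: r_def)
      finally show ?thesis .
    qed
    show "v' \<in> {v. \<exists>t\<ge>0. y v t + a t < c1 \<and> (\<forall>s\<in>{0..t}. y v s + b s < c2)}"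
    proof (intro CollectI exI[of _ t] conjI ballI)
      show "t \<ge> 0" by fact
      have "\<eta> \<le> c1 - (y v t + a t)" by (simp add: \<eta>_def)
      then show "y v' t + a t < c1" using close[of t] t by auto
      fix s assume s: "s \<in> {0..t}"
      have "y v s + b s \<le> y v m + b m" using m(2) s by blast
      moreover have "\<eta> \<le> c2 - (y v m + b m)" by (simp add: \<eta>_def)
      ultimately show "y v' s + b s < c2" using close[OF s] by linarith
    qed
  qed
qed

lemma exit_case:
  fixes y y' g1 h J J1 :: "real \<Rightarrow> real" and Mf Mh \<delta> t0 :: real
  assumes dy: "\<And>s. (y has_real_derivative y' s) (at s)"
    and dy': "\<And>s. (y' has_real_derivative (g1 s * sin (y s) - (1 + h s) * cos (y s))) (at s)"
    and dJ: "\<And>s. (J has_real_derivative J1 s) (at s)" and dJ1: "\<And>s. (J1 has_real_derivative h s) (at s)"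
    and bg: "\<And>s. \<bar>g1 s\<bar> \<le> Mf" and bh: "\<And>s. \<bar>h s\<bar> \<le> Mh" and Jb: "\<And>s. \<bar>J s\<bar> \<le> \<delta>/2"
    and \<delta>: "0 < \<delta>" "\<delta> \<le> 1/4" "\<delta> * (Mf + Mh + 1) \<le> 1/4"
    and t0: "0 < t0" and at: "y t0 + J t0 = \<delta>" and before: "\<And>s. 0 \<le> s \<Longrightarrow> s < t0 \<Longrightarrow> y s + J s > \<delta>"
  shows "\<exists>r>0. y (t0 + r) + J (t0 + r) < \<delta> \<and> (\<forall>s\<in>{t0..t0+r}. y s \<le> 2 * \<delta>)"
proof -
  have "isCont y t0" using dy by (rule DERIV_isCont)
  then have "\<exists>e>0. \<forall>s. s \<noteq> t0 \<and> norm (s - t0) < e \<longrightarrow> norm (y s - y t0) < \<delta>/2"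
  proof -
    have "\<forall>r>0. \<exists>e>0. \<forall>s. s \<noteq> t0 \<and> norm (s - t0) < e \<longrightarrow> norm (y s - y t0) < r"
      using \<open>isCont y t0\<close> unfolding isCont_def LIM_eq .
    moreover have "\<delta>/2 > 0" using \<delta> by simp
    ultimately show ?thesis by blast
  qed
  then obtain e where e: "e > 0" and H: "\<forall>s. s \<noteq> t0 \<and> norm (s - t0) < e \<longrightarrow> norm (y s - y t0) < \<delta>/2"
    by blast
  have ye: "\<bar>y s - y t0\<bar> < \<delta>/2" if "\<bar>s - t0\<bar> < e" for s
  proof (cases "s = t0")
    case True then show ?thesis using \<delta> by simp
  next
    case False then show ?thesis using H that by simp
  qed
  have yt0: "\<delta>/2 \<le> y t0" "y t0 \<le> 3*\<delta>/2" using at Jb[of t0] by auto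
  have near: "0 \<le> y s \<and> y s \<le> 2*\<delta>" if "\<bar>s - t0\<bar> < e" for s
  proof -
    have "\<bar>y s - y t0\<bar> < \<delta>/2" by (rule ye[OF that])
    then have "y s - y t0 < \<delta>/2" "y t0 - y s < \<delta>/2" by linarith+
    then show ?thesis using yt0 by linarith
  qed
  define w2 where "w2 = (\<lambda>s. (g1 s * sin (y s) - (1 + h s) * cos (y s)) + h s)"
  have dw: "((\<lambda>s. y s + J s) has_real_derivative y' s + J1 s) (at s)" for s
    by (intro DERIV_add dy dJ)
  have dw1: "((\<lambda>s. y' s + J1 s) has_real_derivative w2 s) (at s)" for s
    unfolding w2_def by (intro DERIV_add dy' dJ1)
  have neg: "w2 s \<le> 0" if "\<bar>s - t0\<bar> < e" for s
  proof -
    have "g1 s * sin (y s) - cos (y s) + h s * (1 - cos (y s)) < 0"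
      using near[OF that] by (intro accel_neg[OF bg bh _ _ \<delta>]) auto
    then show ?thesis unfolding w2_def by (simp add: algebra_simps)
  qed
  define r where "r = min e t0 / 2"
  have r: "0 < r" "r < e" "r < t0" using e t0 by (auto simp: r_def)
  have "(y (t0 + r) + J (t0 + r)) + (y (t0 - r) + J (t0 - r)) \<le> 2 * (y t0 + J t0)"
    using concave_touch[OF dw dw1, of t0 e r] neg r by auto
  moreover have "y (t0 - r) + J (t0 - r) > \<delta>" using r by (intro before) auto
  ultimately have 1: "y (t0 + r) + J (t0 + r) < \<delta>" using at by (smt (verit))
  have 2: "\<forall>s\<in>{t0..t0+r}. y s \<le> 2 * \<delta>"
    using near r by auto
  show ?thesis using 1 2 r by blast
qed




lemma sin_lip: fixes x y :: real shows "\<bar>sin x - sin y\<bar> \<le> \<bar>x - y\<bar>"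
proof -
  have "\<bar>sin x - sin y\<bar> \<le> 1 * \<bar>x - y\<bar>"
    by (rule mvt_bound_abs[where u'=cos]) (auto intro: DERIV_sin simp: abs_cos_le_one)
  then show ?thesis by simp
qed

lemma cos_lip: fixes x y :: real shows "\<bar>cos x - cos y\<bar> \<le> \<bar>x - y\<bar>"
proof -
  have "\<bar>cos x - cos y\<bar> \<le> 1 * \<bar>x - y\<bar>"
    by (rule mvt_bound_abs[where u'="\<lambda>s. - sin s"]) (auto intro: DERIV_cos simp: abs_sin_le_one)
  then show ?thesis by simp
qed

lemma F_ode:
  fixes f h :: "real \<Rightarrow> real"
  assumes cf: "continuous_on UNIV f" and ch: "continuous_on UNIV h"
    and bf: "\<And>t. \<bar>f t\<bar> \<le> Mf" and bh: "\<And>t. \<bar>h t\<bar> \<le> Mh"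
  shows "ode (\<lambda>t x. f t * sin x - (1 + h t) * cos x) (Mf + 1 + Mh) (Mf + 1 + Mh)"
proof
  fix u :: "real \<Rightarrow> real" assume "continuous_on UNIV u"
  then show "continuous_on UNIV (\<lambda>t. f t * sin (u t) - (1 + h t) * cos (u t))"
    using cf ch by (intro continuous_intros) auto
next
  fix t x y :: real
  have 1: "\<bar>f t * sin x - f t * sin y\<bar> \<le> Mf * \<bar>x - y\<bar>"
  proof -
    have "\<bar>f t * sin x - f t * sin y\<bar> = \<bar>f t\<bar> * \<bar>sin x - sin y\<bar>" by (simp add: abs_mult flip: right_diff_distrib)
    also have "\<dots> \<le> Mf * \<bar>x - y\<bar>" by (intro mult_mono bf sin_lip) (use bf[of t] in auto)
    finally show ?thesis .
  qed
  have 2: "\<bar>(1 + h t) * cos x - (1 + h t) * cos y\<bar> \<le> (1 + Mh) * \<bar>x - y\<bar>"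
  proof -
    have "\<bar>(1 + h t) * cos x - (1 + h t) * cos y\<bar> = \<bar>1 + h t\<bar> * \<bar>cos x - cos y\<bar>" by (simp add: abs_mult flip: right_diff_distrib)
    also have "\<dots> \<le> (1 + Mh) * \<bar>x - y\<bar>" using bh[of t] by (intro mult_mono cos_lip) auto
    finally show ?thesis .
  qed
  show "\<bar>f t * sin x - (1 + h t) * cos x - (f t * sin y - (1 + h t) * cos y)\<bar> \<le> (Mf + 1 + Mh) * \<bar>x - y\<bar>"
  proof -
    let ?A = "f t * sin x" and ?B = "(1 + h t) * cos x" and ?C = "f t * sin y" and ?D = "(1 + h t) * cos y"
    have "?A - ?B - (?C - ?D) = (?A - ?C) - (?B - ?D)" by simp
    then have "\<bar>?A - ?B - (?C - ?D)\<bar> \<le> \<bar>?A - ?C\<bar> + \<bar>?B - ?D\<bar>" using abs_triangle_ineq4 by metis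
    also have "\<dots> \<le> Mf * \<bar>x - y\<bar> + (1 + Mh) * \<bar>x - y\<bar>" using 1 2 by linarith
    also have "\<dots> = (Mf + 1 + Mh) * \<bar>x - y\<bar>" by (simp add: algebra_simps)
    finally show ?thesis .
  qed
next
  fix t x :: real
  have 1: "\<bar>f t * sin x\<bar> \<le> Mf"
  proof -
    have "\<bar>f t * sin x\<bar> = \<bar>f t\<bar> * \<bar>sin x\<bar>" by (simp add: abs_mult)
    also have "\<dots> \<le> Mf * 1" using bf[of t] abs_sin_le_one[of x] by (intro mult_mono) auto
    finally show ?thesis by simp
  qed
  have 2: "\<bar>(1 + h t) * cos x\<bar> \<le> 1 + Mh"
  proof -
    have "\<bar>(1 + h t) * cos x\<bar> = \<bar>1 + h t\<bar> * \<bar>cos x\<bar>" by (simp add: abs_mult)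
    also have "\<dots> \<le> (1 + Mh) * 1" using bh[of t] abs_cos_le_one[of x] by (intro mult_mono) auto
    finally show ?thesis by simp
  qed
  show "\<bar>f t * sin x - (1 + h t) * cos x\<bar> \<le> Mf + 1 + Mh" using 1 2 by linarith
qed

lemma main_shoot:
  fixes f h J J1 :: "real \<Rightarrow> real" and Mf Mh \<delta> :: real
  assumes cf: "continuous_on UNIV f" and ch: "continuous_on UNIV h"
    and bf: "\<And>t. \<bar>f t\<bar> \<le> Mf" and bh: "\<And>t. \<bar>h t\<bar> \<le> Mh"
    and dJ: "\<And>s. (J has_real_derivative J1 s) (at s)" and dJ1: "\<And>s. (J1 has_real_derivative h s) (at s)"
    and Jb: "\<And>s. \<bar>J s\<bar> \<le> \<delta>/2"
    and \<delta>: "0 < \<delta>" "\<delta> \<le> 1/4" "\<delta> * (Mf + Mh + 1) \<le> 1/4"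
  shows "\<exists>x x'. (\<forall>t. (x has_real_derivative x' t) (at t)) \<and>
           (\<forall>t. (x' has_real_derivative (f t * sin (x t) - (1 + h t) * cos (x t))) (at t)) \<and>
           (\<forall>t>0. 0 < x t \<and> x t < pi)"
proof -
  define K where "K = Mf + 1 + Mh"
  define F where "F = (\<lambda>t x. f t * sin x - (1 + h t) * cos x)"
  interpret ode F K K unfolding F_def K_def by (rule F_ode[OF cf ch bf bh])
  have Mf0: "Mf \<ge> 0" "Mh \<ge> 0" using bf[of 0] bh[of 0] by auto
  have K0: "K \<ge> 0" using Mf0 by (simp add: K_def)
  have pi: "3 < pi" "pi < 4" using pi_gt3 pi_less_4 by auto
  have "\<forall>v. \<exists>x x'. x 0 = pi/2 \<and> x' 0 = v \<and> (\<forall>t. (x has_real_derivative x' t) (at t)) \<and>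
      (\<forall>t. (x' has_real_derivative F t (x t)) (at t))"
    using ode_exists by blast
  then obtain xs xs' where sol: "\<And>v. xs v 0 = pi/2" "\<And>v. xs' v 0 = v"
    "\<And>v t. (xs v has_real_derivative xs' v t) (at t)" "\<And>v t. (xs' v has_real_derivative F t (xs v t)) (at t)"
    by metis
  have cx: "continuous_on UNIV (xs v)" for v using deriv_cont sol(3) by blast
  have cJ: "continuous_on UNIV J" using deriv_cont dJ by blast
  have depx: "\<bar>xs v' s - xs v s\<bar> \<le> \<bar>v' - v\<bar> * exp ((1 + K) * s)" if "s \<ge> 0" for v v' s
    using dep[OF sol(3) sol(4) sol(3) sol(4), of v' v s] sol(1,2) that by simp
  define A where "A = {v. \<exists>t\<ge>0. xs v t + J t < \<delta> \<and> (\<forall>s\<in>{0..t}. xs v s + (- J s) < pi - \<delta>)}"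
  define B where "B = {v. \<exists>t\<ge>0. (- xs v t) + J t < -(pi - \<delta>) \<and> (\<forall>s\<in>{0..t}. (- xs v s) + (- J s) < - \<delta>)}"
  have oA: "open A" unfolding A_def
    by (rule open_exit[where K="1+K"]) (use depx K0 cx cJ in \<open>auto intro!: continuous_intros\<close>)
  have oB: "open B" unfolding B_def
  proof (rule open_exit[where K="1+K" and y="\<lambda>v s. - xs v s"])
    fix v v' s :: real assume "0 \<le> s"
    then show "\<bar>- xs v' s - - xs v s\<bar> \<le> \<bar>v' - v\<bar> * exp ((1 + K) * s)"
      using depx[of s v v'] by (simp add: abs_minus_commute)
  qed (use K0 cx cJ in \<open>auto intro!: continuous_intros\<close>)
  have disj: "A \<inter> B = {}"
  proof (rule ccontr)
    assume "A \<inter> B \<noteq> {}"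
    then obtain v t1 t2 where t1: "t1 \<ge> 0" "xs v t1 + J t1 < \<delta>" "\<forall>s\<in>{0..t1}. xs v s + (- J s) < pi - \<delta>"
      and t2: "t2 \<ge> 0" "(- xs v t2) + J t2 < -(pi - \<delta>)" "\<forall>s\<in>{0..t2}. (- xs v s) + (- J s) < - \<delta>"
      unfolding A_def B_def by blast
    show False
    proof (cases "t1 \<le> t2")
      case True then show ?thesis using t1 t2(3) by force
    next
      case False then show ?thesis using t1(3) t2 by force
    qed
  qed
  have quad: "\<bar>xs v t - pi/2 - v * t\<bar> \<le> K * t^2/2" for v t
    using quad_bound[OF sol(3) sol(4), of v t] sol(1,2) by simp
  have quad1: "xs v t \<le> pi/2 + v * t + K * t^2/2" "pi/2 + v * t - K * t^2/2 \<le> xs v t" for v t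
    using quad[of v t] unfolding abs_le_iff by linarith+
  define t0 where "t0 = 1 / (K + 1)"
  define V where "V = 3 * (K + 1)"
  have K1: "K + 1 > 0" using K0 by linarith
  have t0: "0 < t0" "t0 \<le> 1" "V * t0 = 3" using K0 K1 by (auto simp: t0_def V_def field_simps)
  have Kt: "K * s^2 \<le> 1" if "0 \<le> s" "s \<le> t0" for s
  proof -
    have "K * s^2 \<le> K * t0^2" using that K0 by (intro mult_left_mono power_mono) auto
    also have "\<dots> = K / (K+1)^2" by (simp add: t0_def power_divide)
    also have "\<dots> \<le> 1"
    proof -
      have p: "(K+1)^2 > 0" using K1 by simp
      have "K \<le> (K+1)^2" using K0 mult_nonneg_nonneg[OF K0 K0] by (simp add: power2_eq_square algebra_simps)
      then show ?thesis using pos_divide_le_eq[OF p] by simp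
    qed
    finally show ?thesis .
  qed
  have V0: "V \<ge> 0" using K0 by (simp add: V_def)
  have mA: "-V \<in> A" unfolding A_def
  proof (intro CollectI exI[of _ t0] conjI ballI)
    show "0 \<le> t0" using t0 by simp
    have "xs (-V) t0 \<le> pi/2 - V * t0 + K * t0^2/2" using quad1(1)[of "-V" t0] by simp
    then show "xs (-V) t0 + J t0 < \<delta>" using t0 Kt[of t0] Jb[of t0] \<delta> pi by (auto simp: abs_le_iff)
    fix s assume s: "s \<in> {0..t0}"
    have "xs (-V) s \<le> pi/2 - V * s + K * s^2/2" using quad1(1)[of "-V" s] by simp
    moreover have "V * s \<ge> 0" using V0 s by simp
    ultimately show "xs (-V) s + - J s < pi - \<delta>" using Kt[of s] s Jb[of s] \<delta> pi by (auto simp: abs_le_iff)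
  qed
  have mB: "V \<in> B" unfolding B_def
  proof (intro CollectI exI[of _ t0] conjI ballI)
    show "0 \<le> t0" using t0 by simp
    have "xs V t0 \<ge> pi/2 + V * t0 - K * t0^2/2" using quad1(2)[of V t0] by simp
    then show "- xs V t0 + J t0 < - (pi - \<delta>)" using t0 Kt[of t0] Jb[of t0] \<delta> pi by (auto simp: abs_le_iff)
    fix s assume s: "s \<in> {0..t0}"
    have "xs V s \<ge> pi/2 + V * s - K * s^2/2" using quad1(2)[of V s] by simp
    moreover have "V * s \<ge> 0" using V0 s by simp
    ultimately show "- xs V s + - J s < - \<delta>" using Kt[of s] s Jb[of s] \<delta> pi by (auto simp: abs_le_iff)
  qed
  have ne: "A \<inter> {-V..V} \<noteq> {}" "B \<inter> {-V..V} \<noteq> {}" using mA mB V0 by auto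
  have "\<not> {-V..V} \<subseteq> A \<union> B"
  proof
    assume "{-V..V} \<subseteq> A \<union> B"
    then have "A \<inter> {-V..V} = {} \<or> B \<inter> {-V..V} = {}"
      by (intro connectedD[OF connected_Icc oA oB]) (use disj in auto)
    then show False using ne by blast
  qed
  then obtain v where vA: "v \<notin> A" and vB: "v \<notin> B" by blast
  define x where "x = xs v"
  define x' where "x' = xs' v"
  have dx: "\<And>t. (x has_real_derivative x' t) (at t)" unfolding x_def x'_def by (rule sol(3))
  have dx': "\<And>t. (x' has_real_derivative f t * sin (x t) - (1 + h t) * cos (x t)) (at t)"
    using sol(4) unfolding x_def x'_def F_def by simp
  have cxx: "continuous_on UNIV x" unfolding x_def by (rule cx)
  have x0: "x 0 = pi/2" unfolding x_def by (rule sol(1))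
  have inside: "\<forall>t\<ge>0. x t + J t > \<delta> \<and> x t - J t < pi - \<delta>"
  proof (rule ccontr)
    assume nz: "\<not> (\<forall>t\<ge>0. x t + J t > \<delta> \<and> x t - J t < pi - \<delta>)"
    define Z where "Z = {t. 0 \<le> t \<and> (x t + J t \<le> \<delta> \<or> pi - \<delta> \<le> x t - J t)}"
    have Zne: "Z \<noteq> {}" using nz unfolding Z_def by force
    have Zbdd: "bdd_below Z" unfolding Z_def by (rule bdd_belowI[of _ 0]) auto
    have "Z = {t. 0 \<le> t} \<inter> ({t. x t + J t \<le> \<delta>} \<union> {t. pi - \<delta> \<le> x t - J t})"
      unfolding Z_def by auto
    moreover have "closed {t::real. 0 \<le> t}" by (rule closed_Collect_le) (auto intro!: continuous_intros)
    moreover have "closed {t. x t + J t \<le> \<delta>}"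
      by (rule closed_Collect_le) (use cxx cJ in \<open>auto intro!: continuous_intros\<close>)
    moreover have "closed {t. pi - \<delta> \<le> x t - J t}"
      by (rule closed_Collect_le) (use cxx cJ in \<open>auto intro!: continuous_intros\<close>)
    ultimately have Zcl: "closed Z" by (auto intro!: closed_Int closed_Un)
    define ts where "ts = Inf Z"
    have tsZ: "ts \<in> Z" unfolding ts_def by (rule closed_contains_Inf[OF Zne Zbdd Zcl])
    have below: "x s + J s > \<delta> \<and> x s - J s < pi - \<delta>" if "0 \<le> s" "s < ts" for s
    proof (rule ccontr)
      assume "\<not> ?thesis"
      then have "s \<in> Z" using that unfolding Z_def by auto
      then have "ts \<le> s" unfolding ts_def by (rule cInf_lower[OF _ Zbdd])
      then show False using that by simp
    qed
    have "0 \<notin> Z" using x0 Jb[of 0] \<delta> pi unfolding Z_def by (auto simp: abs_le_iff)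
    then have tspos: "ts > 0" using tsZ unfolding Z_def by (cases "ts = 0") auto
    from tsZ have "x ts + J ts \<le> \<delta> \<or> pi - \<delta> \<le> x ts - J ts" unfolding Z_def by auto
    then show False
    proof
      assume a: "x ts + J ts \<le> \<delta>"
      have w2ts: "x ts - J ts < pi - \<delta>" using a Jb[of ts] \<delta> pi by (auto simp: abs_le_iff)
      show False
      proof (cases "x ts + J ts < \<delta>")
        case True
        have "v \<in> A" unfolding A_def
        proof (intro CollectI exI[of _ ts] conjI ballI)
          show "0 \<le> ts" using tspos by simp
          show "xs v ts + J ts < \<delta>" using True by (simp add: x_def)
          fix s assume s: "s \<in> {0..ts}"
          show "xs v s + - J s < pi - \<delta>"
          proof (cases "s < ts")
            case True then show ?thesis using below[of s] s by (simp add: x_def)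
          next
            case False then have "s = ts" using s by auto
            then show ?thesis using w2ts by (simp add: x_def)
          qed
        qed
        then show False using vA by simp
      next
        case False
        then have eq: "x ts + J ts = \<delta>" using a by simp
        obtain r where r: "r > 0" "x (ts + r) + J (ts + r) < \<delta>" "\<forall>s\<in>{ts..ts+r}. x s \<le> 2 * \<delta>"
          using exit_case[OF dx dx' dJ dJ1 bf bh Jb \<delta> tspos eq] below by blast
        have "v \<in> A" unfolding A_def
        proof (intro CollectI exI[of _ "ts + r"] conjI ballI)
          show "0 \<le> ts + r" using tspos r by simp
          show "xs v (ts + r) + J (ts + r) < \<delta>" using r by (simp add: x_def)
          fix s assume s: "s \<in> {0..ts + r}"
          show "xs v s + - J s < pi - \<delta>"
          proof (cases "s < ts")
            case True then show ?thesis using below[of s] s by (simp add: x_def)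
          next
            case False then have "x s \<le> 2 * \<delta>" using s r(3) by auto
            then show ?thesis using Jb[of s] \<delta> pi by (auto simp: x_def abs_le_iff)
          qed
        qed
        then show False using vA by simp
      qed
    next
      assume b: "pi - \<delta> \<le> x ts - J ts"
      have w1ts: "x ts + J ts > \<delta>" using b Jb[of ts] \<delta> pi by (auto simp: abs_le_iff)
      show False
      proof (cases "pi - \<delta> < x ts - J ts")
        case True
        have "v \<in> B" unfolding B_def
        proof (intro CollectI exI[of _ ts] conjI ballI)
          show "0 \<le> ts" using tspos by simp
          show "- xs v ts + J ts < - (pi - \<delta>)" using True by (simp add: x_def)
          fix s assume s: "s \<in> {0..ts}"
          show "- xs v s + - J s < - \<delta>"
          proof (cases "s < ts")
            case True then show ?thesis using below[of s] s by (simp add: x_def)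
          next
            case False then have "s = ts" using s by auto
            then show ?thesis using w1ts by (simp add: x_def)
          qed
        qed
        then show False using vB by simp
      next
        case False
        define y where "y = (\<lambda>s. pi - x s)"
        have eq: "y ts + J ts = \<delta>" using False b by (simp add: y_def)
        have dy: "\<And>s. (y has_real_derivative - x' s) (at s)"
          unfolding y_def by (rule DERIV_cong[OF DERIV_diff[OF DERIV_const dx]]) simp
        have dy': "\<And>s. ((\<lambda>s. - x' s) has_real_derivative (- f s) * sin (y s) - (1 + h s) * cos (y s)) (at s)"
          unfolding y_def by (rule DERIV_cong[OF DERIV_minus[OF dx']]) (simp add: algebra_simps)
        have bmf: "\<And>s. \<bar>- f s\<bar> \<le> Mf" using bf by simp
        have belowy: "\<And>s. 0 \<le> s \<Longrightarrow> s < ts \<Longrightarrow> y s + J s > \<delta>"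
          using below unfolding y_def by force
        obtain r where r: "r > 0" "y (ts + r) + J (ts + r) < \<delta>" "\<forall>s\<in>{ts..ts+r}. y s \<le> 2 * \<delta>"
          using exit_case[OF dy dy' dJ dJ1 bmf bh Jb \<delta> tspos eq belowy] by blast
        have "v \<in> B" unfolding B_def
        proof (intro CollectI exI[of _ "ts + r"] conjI ballI)
          show "0 \<le> ts + r" using tspos r by simp
          show "- xs v (ts + r) + J (ts + r) < - (pi - \<delta>)" using r by (simp add: x_def y_def)
          fix s assume s: "s \<in> {0..ts + r}"
          show "- xs v s + - J s < - \<delta>"
          proof (cases "s < ts")
            case True then show ?thesis using below[of s] s by (simp add: x_def)
          next
            case False then have "y s \<le> 2 * \<delta>" using s r(3) by auto
            then show ?thesis using Jb[of s] \<delta> pi by (auto simp: x_def y_def abs_le_iff)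
          qed
        qed
        then show False using vB by simp
      qed
    qed
  qed
  show ?thesis
  proof (intro exI conjI allI impI)
    fix t show "(x has_real_derivative x' t) (at t)" by (rule dx)
  next
    fix t show "(x' has_real_derivative f t * sin (x t) - (1 + h t) * cos (x t)) (at t)" by (rule dx')
  next
    fix t :: real assume "t > 0"
    then have "\<delta> < x t + J t" "x t - J t < pi - \<delta>" using inside by auto
    moreover have "J t \<le> \<delta>/2" "- J t \<le> \<delta>/2" using Jb[of t] by (auto simp: abs_le_iff)
    ultimately show "0 < x t" "x t < pi" using \<delta> by linarith+
  qed
qed




lemma smooth_cont: "smooth_fun f \<Longrightarrow> continuous_on UNIV f"
  unfolding smooth_fun_def
  by (metis differentiable_imp_continuous_within continuous_at_imp_continuous_on funpow_0)

lemma per_nat: assumes "\<forall>t. \<phi> (t + T) = \<phi> t" shows "\<phi> (t + real m * T) = \<phi> t"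
proof (induction m)
  case (Suc m)
  have "\<phi> (t + real (Suc m) * T) = \<phi> ((t + real m * T) + T)" by (simp add: algebra_simps)
  then show ?case using assms Suc by simp
qed simp

lemma per_int: assumes "\<forall>t. \<phi> (t + T) = \<phi> t" shows "\<phi> (t + real_of_int n * T) = \<phi> t"
proof (cases n rule: int_cases)
  case (nonneg m) then show ?thesis using per_nat[OF assms] by simp
next
  case (neg m)
  have "\<phi> ((t - real (Suc m) * T) + real (Suc m) * T) = \<phi> (t - real (Suc m) * T)" by (rule per_nat[OF assms])
  moreover have "real_of_int n = - real (Suc m)" using neg by simp
  then have e: "t + real_of_int n * T = t - real (Suc m) * T" by (simp only: mult_minus_left diff_conv_add_uminus)
  ultimately show ?thesis by simp
qed

lemma per_bounded:
  fixes \<phi> :: "real \<Rightarrow> real"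
  assumes c: "continuous_on UNIV \<phi>" and p: "\<forall>t. \<phi> (t + T) = \<phi> t" and T: "T > 0"
  shows "\<exists>M. \<forall>t. \<bar>\<phi> t\<bar> \<le> M"
proof -
  have "compact (\<phi> ` {0..T})" by (rule compact_continuous_image[OF continuous_on_subset[OF c]]) auto
  then obtain M where M: "\<forall>y\<in>\<phi> ` {0..T}. norm y \<le> M" using compact_imp_bounded bounded_iff by metis
  have "\<bar>\<phi> t\<bar> \<le> M" for t
  proof -
    define n where "n = \<lfloor>t / T\<rfloor>"
    define s where "s = t - real_of_int n * T"
    have "real_of_int n \<le> t / T" "t / T < real_of_int n + 1" unfolding n_def by linarith+
    then have "real_of_int n * T \<le> t" "t < (real_of_int n + 1) * T" using T by (simp_all add: field_simps)
    then have s: "s \<in> {0..T}" unfolding s_def by (auto simp: algebra_simps)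
    have "\<phi> t = \<phi> (s + real_of_int n * T)" by (simp add: s_def)
    also have "\<dots> = \<phi> s" by (rule per_int[OF p])
    finally show ?thesis using M s by auto
  qed
  then show ?thesis by blast
qed

lemma prim_unique:
  fixes u :: "real \<Rightarrow> real"
  assumes c: "continuous_on UNIV \<phi>" and d: "\<And>t. (u has_real_derivative \<phi> t) (at t)" and u0: "u 0 = 0"
  shows "u t = prim \<phi> t"
proof -
  have "\<And>t. ((\<lambda>t. u t - prim \<phi> t) has_real_derivative 0) (at t)"
    by (rule DERIV_cong[OF DERIV_diff[OF d prim_deriv[OF c]]]) simp
  then have "(\<lambda>t. u t - prim \<phi> t) t = (\<lambda>t. u t - prim \<phi> t) 0" by (intro DERIV_isconst_all) auto
  then show ?thesis using u0 by simp
qed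

lemma per_of_deriv:
  fixes u u' :: "real \<Rightarrow> real"
  assumes d: "\<And>t. (u has_real_derivative u' t) (at t)" and p: "\<forall>t. u' (t + T) = u' t" and uT: "u T = u 0"
  shows "\<forall>t. u (t + T) = u t"
proof
  fix t
  have dd: "\<And>s. ((\<lambda>s. u (s + T) - u s) has_real_derivative 0) (at s)"
  proof -
    fix s
    have "((\<lambda>s. u (s + T)) has_real_derivative u' (s + T) * 1) (at s)"
      by (rule DERIV_chain2[OF d]) (auto intro!: derivative_eq_intros)
    then show "((\<lambda>s. u (s + T) - u s) has_real_derivative 0) (at s)"
      by (rule DERIV_cong[OF DERIV_diff[OF _ d]]) (simp add: p)
  qed
  have "(\<lambda>s. u (s + T) - u s) t = (\<lambda>s. u (s + T) - u s) 0" by (rule DERIV_isconst_all) (use dd in auto)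
  then show "u (t + T) = u t" using uT by simp
qed

theorem theorem3p1:
  fixes f g :: "real \<Rightarrow> real" and T :: real
  assumes f_smooth: "smooth_fun f"
    and f_bdd: "bounded (range f)"
    and df_bdd: "bounded (range (deriv f))"
    and g_smooth: "smooth_fun g"
    and T_pos: "T > 0"
    and g_periodic: "\<forall>t. g (t + T) = g t"
    and g_mean: "(1 / T) * integral {0..T} g = 0"
  shows "\<exists>lam0 > 0. \<forall>lam \<ge> lam0. \<exists>x x' :: real \<Rightarrow> real.
           (\<forall>t. (x has_real_derivative x' t) (at t)) \<and>
           (\<forall>t. (x' has_real_derivative
                   (f t * sin (x t) - (1 + g (lam * t)) * cos (x t))) (at t)) \<and>
           (\<forall>t > 0. 0 < x t \<and> x t < pi)"
proof -
  have cf: "continuous_on UNIV f" by (rule smooth_cont[OF f_smooth])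
  have cg: "continuous_on UNIV g" by (rule smooth_cont[OF g_smooth])
  obtain Mf where bf: "\<And>t. \<bar>f t\<bar> \<le> Mf" using f_bdd unfolding bounded_iff by auto
  obtain Mg where bg: "\<And>t. \<bar>g t\<bar> \<le> Mg" using per_bounded[OF cg g_periodic T_pos] by auto
  have Mf0: "Mf \<ge> 0" "Mg \<ge> 0" using bf[of 0] bg[of 0] by auto
  define G1 where "G1 = prim g"
  have dG1: "\<And>t. (G1 has_real_derivative g t) (at t)" unfolding G1_def by (rule prim_deriv[OF cg])
  have cG1: "continuous_on UNIV G1" by (rule deriv_cont[OF dG1])
  have I0: "integral {0..T} g = 0" using g_mean T_pos by simp
  have G1T: "G1 T = G1 0" unfolding G1_def using prim_eq[OF cg, of 0 T] T_pos I0 by simp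
  have pG1: "\<forall>t. G1 (t + T) = G1 t" by (rule per_of_deriv[OF dG1 g_periodic G1T])
  define m where "m = prim G1 T / T"
  define G3 where "G3 = (\<lambda>s. prim G1 s - m * s)"
  have dG3: "\<And>t. (G3 has_real_derivative G1 t - m) (at t)"
    unfolding G3_def by (rule DERIV_cong[OF DERIV_diff[OF prim_deriv[OF cG1] DERIV_cmult[OF DERIV_ident]]]) simp
  have dG2: "\<And>t. ((\<lambda>t. G1 t - m) has_real_derivative g t) (at t)"
    by (rule DERIV_cong[OF DERIV_diff[OF dG1 DERIV_const]]) simp
  have G3T: "G3 T = G3 0" unfolding G3_def m_def using T_pos by simp
  have pG3: "\<forall>t. G3 (t + T) = G3 t" by (rule per_of_deriv[OF dG3 _ G3T]) (use pG1 in simp)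
  have cG3: "continuous_on UNIV G3" by (rule deriv_cont[OF dG3])
  obtain K3 where bG3: "\<And>t. \<bar>G3 t\<bar> \<le> K3" using per_bounded[OF cG3 pG3 T_pos] by auto
  have K30: "K3 \<ge> 0" using bG3[of 0] by auto
  define \<delta> where "\<delta> = min (1/4) (1 / (4 * (Mf + Mg + 1)))"
  have P: "Mf + Mg + 1 > 0" using Mf0 by linarith
  have \<delta>: "0 < \<delta>" "\<delta> \<le> 1/4" "\<delta> * (Mf + Mg + 1) \<le> 1/4"
  proof -
    show "0 < \<delta>" using P by (simp add: \<delta>_def)
    show "\<delta> \<le> 1/4" by (simp add: \<delta>_def)
    have "\<delta> \<le> 1 / (4 * (Mf + Mg + 1))" by (simp add: \<delta>_def)
    then have "\<delta> * (Mf + Mg + 1) \<le> 1 / (4 * (Mf + Mg + 1)) * (Mf + Mg + 1)"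
      using P by (intro mult_right_mono) auto
    also have "\<dots> = 1/4" using P by simp
    finally show "\<delta> * (Mf + Mg + 1) \<le> 1/4" .
  qed
  define lam0 where "lam0 = 2 * K3 / \<delta> + 1"
  have q0: "2 * K3 / \<delta> \<ge> 0" using K30 \<delta> by simp
  show ?thesis
  proof (intro exI[of _ lam0] conjI allI impI)
    show "lam0 > 0" using q0 by (simp add: lam0_def)
    fix lam assume lam: "lam0 \<le> lam"
    have lam1: "1 \<le> lam" using lam q0 by (simp add: lam0_def)
    have lam2: "2 * K3 / \<delta> \<le> lam" using lam by (simp add: lam0_def)
    define h where "h = (\<lambda>t. g (lam * t))"
    define J where "J = (\<lambda>t. G3 (lam * t) / lam^2)"
    define J1 where "J1 = (\<lambda>t. (G1 (lam * t) - m) / lam)"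
    have ch: "continuous_on UNIV h" unfolding h_def
      by (rule continuous_on_compose2[OF cg]) (auto intro!: continuous_intros)
    have bh: "\<And>t. \<bar>h t\<bar> \<le> Mg" unfolding h_def by (rule bg)
    have dJ: "(J has_real_derivative J1 t) (at t)" for t
    proof -
      have "((\<lambda>t. G3 (lam * t)) has_real_derivative (G1 (lam * t) - m) * lam) (at t)"
        by (rule DERIV_chain2[OF dG3]) (auto intro!: derivative_eq_intros)
      then have "((\<lambda>t. G3 (lam * t) / lam^2) has_real_derivative (G1 (lam * t) - m) * lam / lam^2) (at t)"
        by (rule DERIV_cdivide)
      then show ?thesis unfolding J_def J1_def
        by (rule DERIV_cong) (use lam1 in \<open>simp add: power2_eq_square\<close>)
    qed
    have dJ1: "(J1 has_real_derivative h t) (at t)" for t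
    proof -
      have "((\<lambda>t. G1 (lam * t) - m) has_real_derivative g (lam * t) * lam) (at t)"
        by (rule DERIV_chain2[OF dG2, where g="\<lambda>t. lam * t"]) (auto intro!: derivative_eq_intros)
      then have "((\<lambda>t. (G1 (lam * t) - m) / lam) has_real_derivative g (lam * t) * lam / lam) (at t)"
        by (rule DERIV_cdivide)
      then show ?thesis unfolding J1_def h_def
        by (rule DERIV_cong) (use lam1 in simp)
    qed
    have Jb: "\<bar>J t\<bar> \<le> \<delta>/2" for t
    proof -
      have l2: "lam \<le> lam^2" using lam1 by (simp add: power2_eq_square)
      have "\<bar>J t\<bar> = \<bar>G3 (lam * t)\<bar> / lam^2" using lam1 by (simp add: J_def abs_divide)
      also have "\<dots> \<le> K3 / lam^2" using lam1 bG3 by (intro divide_right_mono) auto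
      also have "\<dots> \<le> K3 / lam" using lam1 K30 l2 by (intro divide_left_mono) auto
      also have "\<dots> \<le> \<delta>/2"
      proof -
        have "2 * K3 \<le> lam * \<delta>" using lam2 \<delta> by (simp add: divide_le_eq)
        then show ?thesis using lam1 \<delta> by (simp add: divide_le_eq field_simps)
      qed
      finally show ?thesis .
    qed
    obtain x x' where sol: "\<forall>t. (x has_real_derivative x' t) (at t)"
      "\<forall>t. (x' has_real_derivative (f t * sin (x t) - (1 + h t) * cos (x t))) (at t)"
      "\<forall>t>0. 0 < x t \<and> x t < pi"
      using main_shoot[OF cf ch bf bh dJ dJ1 Jb \<delta>] by blast
    show "\<exists>x x' :: real \<Rightarrow> real.
           (\<forall>t. (x has_real_derivative x' t) (at t)) \<and>
           (\<forall>t. (x' has_real_derivative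
                   (f t * sin (x t) - (1 + g (lam * t)) * cos (x t))) (at t)) \<and>
           (\<forall>t > 0. 0 < x t \<and> x t < pi)"
      using sol unfolding h_def by blast
  qed
qed


end
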